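(* Let $U\subseteq\mathbb{R}^n$ and $1<p<2$. Then for every $k>0$ there exists a constant $C(k)>0$ such that for every two nonnegative functions $f\in L^{2,\infty}(U)$ and $g\in L^p(U)$ there exist functions $\tilde f\in L^{2,\infty}(U)$ and $\tilde g\in L^p(U)$ with $f+g=\tilde f+\tilde g$, $\tilde g\in\{0\}\cup(k,\infty]$ pointwise, $\tilde f\le k$, and $$\|\tilde f\|_{L^{2,\infty}(U)}^2+\|\tilde g\|_{L^p(U)}^p\le C(k)\left(\|f\|_{L^{2,\infty}(U)}^2+\|g\|_{L^p(U)}^p\right).$$
   Context: $L^{2,\infty}(U)$ is the weak $L^2$ space with quasinorm $\|f\|_{L^{2,\infty}(U)}=\sup_{t>0}t\,\mathcal{L}^n(\{x\in U:|f(x)|>t\})^{1/2}$. *)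

theory Defs
  imports "HOL-Analysis.Analysis"
begin

definition weak_L2_norm :: "'a::euclidean_space set \<Rightarrow> ('a \<Rightarrow> real) \<Rightarrow> real" where
  "weak_L2_norm U f = (SUP t\<in>{0<..}. t * sqrt (measure lebesgue {x\<in>U. \<bar>f x\<bar> > t}))"

definition weak_L2 :: "'a::euclidean_space set \<Rightarrow> ('a \<Rightarrow> real) \<Rightarrow> bool" where
  "weak_L2 U f \<longleftrightarrow> f \<in> borel_measurable (restrict_space lebesgue U)
     \<and> (\<forall>t>0. emeasure lebesgue {x\<in>U. \<bar>f x\<bar> > t} < \<infinity>)
     \<and> bdd_above ((\<lambda>t. t * sqrt (measure lebesgue {x\<in>U. \<bar>f x\<bar> > t})) ` {0<..})"

definition Lp_norm :: "real \<Rightarrow> 'a::euclidean_space set \<Rightarrow> ('a \<Rightarrow> real) \<Rightarrow> real" where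
  "Lp_norm p U g = (enn2real (\<integral>\<^sup>+ x\<in>U. ennreal (\<bar>g x\<bar> powr p) \<partial>lebesgue)) powr (1 / p)"

definition Lp :: "real \<Rightarrow> 'a::euclidean_space set \<Rightarrow> ('a \<Rightarrow> real) \<Rightarrow> bool" where
  "Lp p U g \<longleftrightarrow> g \<in> borel_measurable (restrict_space lebesgue U)
     \<and> (\<integral>\<^sup>+ x\<in>U. ennreal (\<bar>g x\<bar> powr p) \<partial>lebesgue) < \<infinity>"

end

theory Submission
  imports Defs
begin

lemma cheb:
  assumes h: "h \<in> borel_measurable M" and t: "t > 0" and p: "p > 0"
  shows "ennreal (t powr p) * emeasure M {x\<in>space M. t < h x}
          \<le> (\<integral>\<^sup>+x. ennreal (\<bar>h x\<bar> powr p) \<partial>M)"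
proof -
  have S: "{x\<in>space M. t < h x} \<in> sets M" using h by measurable
  have "ennreal (t powr p) * emeasure M {x\<in>space M. t < h x}
      = (\<integral>\<^sup>+x. ennreal (t powr p) * indicator {x\<in>space M. t < h x} x \<partial>M)"
    using S by (simp add: nn_integral_cmult_indicator)
  also have "\<dots> \<le> (\<integral>\<^sup>+x. ennreal (\<bar>h x\<bar> powr p) \<partial>M)"
  proof (rule nn_integral_mono)
    fix x assume "x \<in> space M"
    show "ennreal (t powr p) * indicator {x\<in>space M. t < h x} x \<le> ennreal (\<bar>h x\<bar> powr p)"
    proof (cases "t < h x")
      case True
      then have "t powr p \<le> \<bar>h x\<bar> powr p" using t p by (intro powr_mono2) auto
      then show ?thesis using True \<open>x \<in> space M\<close> by (simp add: indicator_def)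
    qed (simp add: indicator_def)
  qed
  finally show ?thesis .
qed

lemma ar: fixes a p N2 :: real assumes a: "a > 0"
  shows "(2^Suc j * a) powr p * (N2 / (2^j*a)^2) = 2 powr p * a powr (p-2) * N2 * (2 powr (p-2))^j"
proof -
  define q :: real where "q = 2^j"
  have q: "q > 0" unfolding q_def by simp
  have e1: "(2^Suc j * a) powr p = 2 powr p * q powr p * a powr p"
    unfolding q_def by (simp add: powr_mult)
  have e2: "(2^j*a)^2 = q powr 2 * a powr 2" unfolding q_def using a by (simp add: power_mult_distrib)
  have e3: "(2 powr (p-2))^j = q powr (p-2)"
  proof -
    have "q = 2 powr real j" unfolding q_def by (simp add: powr_realpow)
    then show ?thesis by (simp add: powr_power powr_powr mult.commute)
  qed
  have e4: "q powr (p-2) = q powr p / q powr 2" "a powr (p-2) = a powr p / a powr 2"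
    by (simp_all add: powr_diff)
  show ?thesis unfolding e1 e2 e3 e4 using q a by (simp add: field_simps)
qed

lemma tail:
  assumes h: "h \<in> borel_measurable M"
    and lv: "\<And>t. t > 0 \<Longrightarrow> emeasure M {x\<in>space M. t < h x} \<le> ennreal (N2 / t^2)"
    and a: "a > 0" and p: "0 < p" "p < 2" and N2: "N2 \<ge> 0"
  shows "(\<integral>\<^sup>+x. ennreal (h x powr p) * indicator {x\<in>space M. a < h x} x \<partial>M)
          \<le> ennreal (2 powr p * a powr (p-2) * N2 / (1 - 2 powr (p-2)))"
proof -
  define A where "A j = {x\<in>space M. 2^j*a < h x}" for j :: nat
  define c where "c j = (2^Suc j * a) powr p" for j :: nat
  define r where "r = (2::real) powr (p-2)"
  define B where "B = 2 powr p * a powr (p-2) * N2"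
  have "(2::real) powr (p-2) < 2 powr 0" using p by (intro powr_less_mono) auto
  then have r: "0 \<le> r" "r < 1" unfolding r_def by auto
  have Am: "A j \<in> sets M" for j unfolding A_def using h by measurable
  have pw: "ennreal (h x powr p) * indicator {x\<in>space M. a < h x} x
      \<le> (\<Sum>j. ennreal (c j) * indicator (A j) x)" if x: "x \<in> space M" for x
  proof (cases "a < h x")
    case True
    obtain n where n: "h x / a < 2^n" using real_arch_pow[of 2 "h x / a"] by auto
    then have "h x \<le> 2^n * a" using a by (simp add: divide_less_eq less_imp_le mult.commute)
    define m where "m = (LEAST n. h x \<le> 2^n * a)"
    have m1: "h x \<le> 2^m * a" unfolding m_def by (rule LeastI) fact
    have "m \<noteq> 0"
    proof
      assume "m = 0" with m1 True show False by simp
    qed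
    then obtain j where j: "m = Suc j" by (cases m) auto
    have "\<not> h x \<le> 2^j * a" using not_less_Least[of j "\<lambda>n. h x \<le> 2^n * a"] j m_def by auto
    then have xj: "x \<in> A j" using x by (auto simp: A_def)
    have "h x powr p \<le> c j" unfolding c_def using m1 j True a p by (intro powr_mono2) auto
    then have "ennreal (h x powr p) * indicator {x\<in>space M. a < h x} x \<le> ennreal (c j) * indicator (A j) x"
      using xj True x by (simp add: indicator_def ennreal_leI)
    also have "\<dots> = (\<Sum>i\<in>{j}. ennreal (c i) * indicator (A i) x)" by (simp only: sum.insert finite.emptyI empty_iff not_False_eq_True sum.empty add_0_right)
    also have "\<dots> \<le> (\<Sum>i. ennreal (c i) * indicator (A i) x)"
      by (rule sum_le_suminf) (auto intro: summableI)
    finally show ?thesis .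
  qed (simp add: indicator_def)
  have "(\<integral>\<^sup>+x. ennreal (h x powr p) * indicator {x\<in>space M. a < h x} x \<partial>M)
      \<le> (\<integral>\<^sup>+x. (\<Sum>j. ennreal (c j) * indicator (A j) x) \<partial>M)"
    by (rule nn_integral_mono) (use pw in auto)
  also have "\<dots> = (\<Sum>j. \<integral>\<^sup>+x. ennreal (c j) * indicator (A j) x \<partial>M)"
    by (rule nn_integral_suminf) (use Am in auto)
  also have "\<dots> = (\<Sum>j. ennreal (c j) * emeasure M (A j))"
    using Am by (simp add: nn_integral_cmult_indicator)
  also have "\<dots> \<le> (\<Sum>j. ennreal (B * r^j))"
  proof (rule suminf_le)
    fix j
    have pos: "2^j * a > 0" using a by simp
    have "emeasure M (A j) \<le> ennreal (N2 / (2^j*a)^2)" unfolding A_def using lv[OF pos] .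
    then have "ennreal (c j) * emeasure M (A j) \<le> ennreal (c j) * ennreal (N2 / (2^j*a)^2)"
      by (rule mult_left_mono) simp
    also have "\<dots> = ennreal (c j * (N2 / (2^j*a)^2))"
      using N2 by (subst ennreal_mult) (auto simp: c_def)
    also have "c j * (N2 / (2^j*a)^2) = B * r^j"
      unfolding c_def B_def r_def using ar[OF a] by simp
    finally show "ennreal (c j) * emeasure M (A j) \<le> ennreal (B * r^j)" .
  qed (auto intro: summableI)
  also have "\<dots> = ennreal (\<Sum>j. B * r^j)"
    using r N2 a unfolding B_def
    by (intro suminf_ennreal2) (auto intro!: summable_mult summable_geometric)
  also have "(\<Sum>j. B * r^j) = B / (1 - r)"
    using r by (simp add: suminf_mult suminf_geometric summable_geometric divide_inverse)
  finally show ?thesis unfolding B_def r_def by simp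
qed


lemma weak_from_levels:
  fixes U :: "'a::euclidean_space set"
  assumes U: "U \<in> sets lebesgue" and hm: "h \<in> borel_measurable (restrict_space lebesgue U)"
    and Mc: "Mc \<ge> 0"
    and lv: "\<And>t. t > 0 \<Longrightarrow> emeasure (restrict_space lebesgue U) {x\<in>U. t < \<bar>h x\<bar>} \<le> ennreal (Mc / t^2)"
  shows "weak_L2 U h" "(weak_L2_norm U h)^2 \<le> Mc"
proof -
  have lv': "emeasure lebesgue {x\<in>U. \<bar>h x\<bar> > t} \<le> ennreal (Mc / t^2)" if t: "t > 0" for t
    using lv[OF t] U by (simp add: emeasure_restrict_space)
  have fin: "emeasure lebesgue {x\<in>U. \<bar>h x\<bar> > t} < \<infinity>" if t: "t > 0" for t
    using lv'[OF t] by (simp add: le_less_trans)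
  have ms: "measure lebesgue {x\<in>U. \<bar>h x\<bar> > t} \<le> Mc / t^2" if t: "t > 0" for t
  proof -
    have "ennreal (measure lebesgue {x\<in>U. \<bar>h x\<bar> > t}) \<le> ennreal (Mc / t^2)"
      using lv'[OF t] fin[OF t] by (simp add: emeasure_eq_ennreal_measure)
    then show ?thesis using Mc by simp
  qed
  have bd: "t * sqrt (measure lebesgue {x\<in>U. \<bar>h x\<bar> > t}) \<le> sqrt Mc" if t: "t > 0" for t
  proof -
    have "sqrt (measure lebesgue {x\<in>U. \<bar>h x\<bar> > t}) \<le> sqrt (Mc / t^2)"
      using ms[OF t] by simp
    also have "sqrt (Mc / t^2) = sqrt Mc / t" using t by (simp add: real_sqrt_divide)
    finally show ?thesis using t by (simp add: field_simps mult.commute)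
  qed
  have bdd: "bdd_above ((\<lambda>t. t * sqrt (measure lebesgue {x\<in>U. \<bar>h x\<bar> > t})) ` {0<..})"
    using bd by (intro bdd_aboveI2[where M="sqrt Mc"]) auto
  show "weak_L2 U h" unfolding weak_L2_def using hm fin bdd by auto
  have W: "weak_L2_norm U h \<le> sqrt Mc" unfolding weak_L2_norm_def
    using bd by (intro cSUP_least) auto
  have "1 * sqrt (measure lebesgue {x\<in>U. \<bar>h x\<bar> > 1}) \<le> weak_L2_norm U h"
    unfolding weak_L2_norm_def using bdd by (intro cSUP_upper) auto
  then have W0: "0 \<le> weak_L2_norm U h" by (meson order_trans real_sqrt_ge_zero mult_nonneg_nonneg zero_le_one measure_nonneg)
  have "(weak_L2_norm U h)^2 \<le> (sqrt Mc)^2" using W W0 by (intro power_mono) auto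
  then show "(weak_L2_norm U h)^2 \<le> Mc" using Mc by simp
qed

lemma levels_from_weak:
  fixes U :: "'a::euclidean_space set"
  assumes U: "U \<in> sets lebesgue" and w: "weak_L2 U f" and t: "t > 0"
  shows "emeasure (restrict_space lebesgue U) {x\<in>U. t < \<bar>f x\<bar>} \<le> ennreal ((weak_L2_norm U f)^2 / t^2)"
proof -
  let ?m = "measure lebesgue {x\<in>U. \<bar>f x\<bar> > t}"
  have fin: "emeasure lebesgue {x\<in>U. \<bar>f x\<bar> > t} < \<infinity>" using w t unfolding weak_L2_def by auto
  have bdd: "bdd_above ((\<lambda>t. t * sqrt (measure lebesgue {x\<in>U. \<bar>f x\<bar> > t})) ` {0<..})"
    using w unfolding weak_L2_def by auto
  have "t * sqrt ?m \<le> weak_L2_norm U f"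
    unfolding weak_L2_norm_def using bdd t by (intro cSUP_upper) auto
  then have "(t * sqrt ?m)^2 \<le> (weak_L2_norm U f)^2"
    using t by (intro power_mono) auto
  then have "t^2 * ?m \<le> (weak_L2_norm U f)^2" by (simp add: power_mult_distrib)
  then have "?m \<le> (weak_L2_norm U f)^2 / t^2" using t by (simp add: field_simps mult.commute)
  then have "ennreal ?m \<le> ennreal ((weak_L2_norm U f)^2 / t^2)" by (rule ennreal_leI)
  moreover have "emeasure (restrict_space lebesgue U) {x\<in>U. t < \<bar>f x\<bar>} = emeasure lebesgue {x\<in>U. t < \<bar>f x\<bar>}"
    using U by (intro emeasure_restrict_space) auto
  moreover have "emeasure lebesgue {x\<in>U. t < \<bar>f x\<bar>} = ennreal ?m"
    using fin by (intro emeasure_eq_ennreal_measure) auto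
  ultimately show ?thesis by simp
qed

lemma Lp_norm_powr:
  assumes "p > 0"
  shows "(Lp_norm p U g) powr p = enn2real (\<integral>\<^sup>+ x\<in>U. ennreal (\<bar>g x\<bar> powr p) \<partial>lebesgue)"
  unfolding Lp_norm_def using assms by (simp add: powr_powr)

lemma ar2:
  fixes t k I p :: real
  assumes t: "0 < t" "t < k" and I: "I \<ge> 0" and p: "0 < p" "p < 2"
  shows "I / (t/2) powr p \<le> 2 powr p * k powr (2-p) * I / t^2"
proof -
  have a: "t powr (2-p) \<le> k powr (2-p)" using t p by (intro powr_mono2) auto
  have b: "t powr (2-p) = t^2 / t powr p" using t by (simp add: powr_diff)
  have "I / (t/2) powr p = 2 powr p * I / t powr p" by (simp add: powr_divide)
  also have "\<dots> = 2 powr p * I * t powr (2-p) / t^2" using t by (simp add: b field_simps)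
  also have "\<dots> \<le> 2 powr p * I * k powr (2-p) / t^2"
    using a I by (intro divide_right_mono mult_left_mono) auto
  finally show ?thesis by (simp add: mult_ac)
qed


theorem lemma3p2:
  fixes U :: "'a::euclidean_space set" and p :: real
  assumes "U \<in> sets lebesgue" and "1 < p" and "p < 2"
  shows "\<forall>k>0. \<exists>C>0. \<forall>f g.
           weak_L2 U f \<and> Lp p U g \<and> (\<forall>x\<in>U. f x \<ge> 0 \<and> g x \<ge> 0) \<longrightarrow>
           (\<exists>f' g'. weak_L2 U f' \<and> Lp p U g'
              \<and> (\<forall>x\<in>U. f x + g x = f' x + g' x)
              \<and> (\<forall>x\<in>U. g' x = 0 \<or> g' x > k)
              \<and> (\<forall>x\<in>U. f' x \<le> k)
              \<and> (weak_L2_norm U f')\<^sup>2 + (Lp_norm p U g') powr p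
                  \<le> C * ((weak_L2_norm U f)\<^sup>2 + (Lp_norm p U g) powr p))"
proof (intro allI impI)
  fix k :: real assume k: "k > 0"
  note U = assms(1)
  have p: "0 < p" "p < 2" using assms by auto
  define R where "R = restrict_space lebesgue U"
  have spR: "space R = U" unfolding R_def using U by simp
  have Ru: "U \<inter> space lebesgue \<in> sets lebesgue" using U by simp
  define a where "a = k / 2"
  have a: "a > 0" using k by (simp add: a_def)
  have "(2::real) powr (p-2) < 2 powr 0" using p by (intro powr_less_mono) auto
  then have r1: "1 - (2::real) powr (p-2) > 0" by simp
  define K where "K = 2 powr p * a powr (p-2) / (1 - 2 powr (p-2))"
  have K: "K \<ge> 0" unfolding K_def using r1 by simp
  define C where "C = 4 + 2 powr p * K + 2 powr p + 2 powr p * k powr (2-p)"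
  have Cpos: "C > 0" unfolding C_def using K by (simp add: add_pos_nonneg)
  show "\<exists>C>0. \<forall>f g.
           weak_L2 U f \<and> Lp p U g \<and> (\<forall>x\<in>U. f x \<ge> 0 \<and> g x \<ge> 0) \<longrightarrow>
           (\<exists>f' g'. weak_L2 U f' \<and> Lp p U g'
              \<and> (\<forall>x\<in>U. f x + g x = f' x + g' x)
              \<and> (\<forall>x\<in>U. g' x = 0 \<or> g' x > k)
              \<and> (\<forall>x\<in>U. f' x \<le> k)
              \<and> (weak_L2_norm U f')\<^sup>2 + (Lp_norm p U g') powr p
                  \<le> C * ((weak_L2_norm U f)\<^sup>2 + (Lp_norm p U g) powr p))"
  proof (intro exI[of _ C] conjI allI impI Cpos)
    fix f g :: "'a \<Rightarrow> real"
    assume H: "weak_L2 U f \<and> Lp p U g \<and> (\<forall>x\<in>U. f x \<ge> 0 \<and> g x \<ge> 0)"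
    then have wf: "weak_L2 U f" and lg: "Lp p U g" and nn: "\<And>x. x \<in> U \<Longrightarrow> f x \<ge> 0 \<and> g x \<ge> 0"
      by auto
    have fm[measurable]: "f \<in> borel_measurable R" using wf unfolding weak_L2_def R_def by auto
    have gm[measurable]: "g \<in> borel_measurable R" using lg unfolding Lp_def R_def by auto
    define N where "N = weak_L2_norm U f"
    define Ig where "Ig = (\<integral>\<^sup>+ x\<in>U. ennreal (\<bar>g x\<bar> powr p) \<partial>lebesgue)"
    define I where "I = enn2real Ig"
    have Igfin: "Ig < \<infinity>" using lg unfolding Lp_def Ig_def by auto
    have IgI: "Ig = ennreal I" unfolding I_def using Igfin by simp
    have I0: "I \<ge> 0" unfolding I_def by simp
    have IgR: "Ig = (\<integral>\<^sup>+ x. ennreal (\<bar>g x\<bar> powr p) \<partial>R)"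
      unfolding Ig_def R_def using Ru by (simp add: nn_integral_restrict_space)
    have LpI: "(Lp_norm p U g) powr p = I" unfolding I_def Ig_def using p by (simp add: Lp_norm_powr)
    have lvf: "emeasure R {x\<in>space R. t < f x} \<le> ennreal (N^2 / t^2)" if t: "t > 0" for t
    proof -
      have "{x\<in>space R. t < f x} = {x\<in>U. t < \<bar>f x\<bar>}" using nn spR by auto
      then show ?thesis using levels_from_weak[OF U wf t] unfolding R_def N_def by simp
    qed
    have lvg: "emeasure R {x\<in>space R. t < g x} \<le> ennreal (I / t powr p)" if t: "t > 0" for t
    proof -
      have c: "ennreal (t powr p) * emeasure R {x\<in>space R. t < g x} \<le> ennreal I"
        using cheb[OF gm t p(1)] IgR IgI by simp
      show ?thesis
      proof (cases "emeasure R {x\<in>space R. t < g x}" rule: ennreal_cases)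
        case (real e)
        then have "ennreal (t powr p * e) \<le> ennreal I" using c t by (simp add: ennreal_mult)
        then have "t powr p * e \<le> I" using I0 by simp
        then have "e \<le> I / t powr p" using t by (simp add: field_simps mult.commute)
        then show ?thesis using real by (simp add: ennreal_leI)
      next
        case top
        then have "ennreal (t powr p) * emeasure R {x\<in>space R. t < g x} = top"
          using t by (simp add: ennreal_mult_top)
        then show ?thesis using c by (simp add: top_unique)
      qed
    qed
    define f' where "f' x = (if f x + g x \<le> k then f x + g x else 0)" for x
    define g' where "g' x = (if f x + g x \<le> k then 0 else f x + g x)" for x
    have f'm[measurable]: "f' \<in> borel_measurable R" unfolding f'_def by measurable
    have g'm[measurable]: "g' \<in> borel_measurable R" unfolding g'_def by measurable
    define Mc where "Mc = 4 * N^2 + 2 powr p * k powr (2-p) * I"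
    have Mc: "Mc \<ge> 0" unfolding Mc_def using I0 by simp
    have lvf': "emeasure R {x\<in>U. t < \<bar>f' x\<bar>} \<le> ennreal (Mc / t^2)" if t: "t > 0" for t
    proof (cases "t < k")
      case False
      then have "{x\<in>U. t < \<bar>f' x\<bar>} = {}" using nn t by (auto simp: f'_def)
      then show ?thesis by (metis emeasure_empty zero_le)
    next
      case True
      have sub: "{x\<in>U. t < \<bar>f' x\<bar>} \<subseteq> {x\<in>space R. t/2 < f x} \<union> {x\<in>space R. t/2 < g x}"
        using nn t spR by (auto simp: f'_def split: if_splits)
      have t2: "t/2 > 0" using t by simp
      have "emeasure R {x\<in>U. t < \<bar>f' x\<bar>} \<le> emeasure R ({x\<in>space R. t/2 < f x} \<union> {x\<in>space R. t/2 < g x})"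
        by (rule emeasure_mono[OF sub]) measurable
      also have "\<dots> \<le> emeasure R {x\<in>space R. t/2 < f x} + emeasure R {x\<in>space R. t/2 < g x}"
        by (rule emeasure_subadditive) measurable
      also have "\<dots> \<le> ennreal (N^2 / (t/2)^2) + ennreal (I / (t/2) powr p)"
        using lvf[OF t2] lvg[OF t2] by (rule add_mono)
      also have "\<dots> = ennreal (N^2 / (t/2)^2 + I / (t/2) powr p)"
        using I0 by simp
      also have "\<dots> \<le> ennreal (Mc / t^2)"
      proof (rule ennreal_leI)
        have "N^2 / (t/2)^2 = 4 * N^2 / t^2" by (simp add: power_divide)
        moreover have "I / (t/2) powr p \<le> 2 powr p * k powr (2-p) * I / t^2"
          using ar2[OF t True I0 p] .
        ultimately show "N^2 / (t/2)^2 + I / (t/2) powr p \<le> Mc / t^2"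
          unfolding Mc_def by (simp add: add_divide_distrib)
      qed
      finally show ?thesis .
    qed
    have wf': "weak_L2 U f'" and Wf': "(weak_L2_norm U f')^2 \<le> Mc"
      using weak_from_levels[OF U _ Mc, of f'] f'm lvf' unfolding R_def by auto
    define S where "S = {x\<in>space R. a < f x}"
    have pw: "ennreal (\<bar>g' x\<bar> powr p) \<le> ennreal (2 powr p) * (ennreal (f x powr p) * indicator S x)
               + ennreal (2 powr p) * ennreal (\<bar>g x\<bar> powr p)" if x: "x \<in> space R" for x
    proof -
      have xU: "x \<in> U" using x spR by simp
      have f0: "f x \<ge> 0" and g0: "g x \<ge> 0" using nn[OF xU] by auto
      show ?thesis
      proof (cases "f x + g x \<le> k")
        case True then show ?thesis by (simp add: g'_def)
      next
        case False
        show ?thesis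
        proof (cases "g x \<le> f x")
          case True
          have xS: "x \<in> S" using False True x unfolding S_def a_def by auto
          have "\<bar>g' x\<bar> powr p \<le> (2 * f x) powr p"
            using False True f0 g0 p by (auto simp: g'_def intro!: powr_mono2)
          also have "\<dots> = 2 powr p * f x powr p" using f0 by (simp add: powr_mult)
          finally have "ennreal (\<bar>g' x\<bar> powr p) \<le> ennreal (2 powr p) * (ennreal (f x powr p) * indicator S x)"
            using xS by (simp add: ennreal_mult[symmetric] ennreal_leI)
          then show ?thesis by (simp add: add_increasing2)
        next
          case gt: False
          have "\<bar>g' x\<bar> powr p \<le> (2 * \<bar>g x\<bar>) powr p"
            using False gt f0 g0 p by (auto simp: g'_def intro!: powr_mono2)
          also have "\<dots> = 2 powr p * \<bar>g x\<bar> powr p" by (simp add: powr_mult)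
          finally have "ennreal (\<bar>g' x\<bar> powr p) \<le> ennreal (2 powr p) * ennreal (\<bar>g x\<bar> powr p)"
            by (simp add: ennreal_mult[symmetric] ennreal_leI)
          then show ?thesis by (simp add: add_increasing)
        qed
      qed
    qed
    have tl: "(\<integral>\<^sup>+x. ennreal (f x powr p) * indicator S x \<partial>R) \<le> ennreal (K * N^2)"
    proof -
      have "(\<integral>\<^sup>+x. ennreal (f x powr p) * indicator S x \<partial>R)
          \<le> ennreal (2 powr p * a powr (p-2) * N^2 / (1 - 2 powr (p-2)))"
        unfolding S_def by (rule tail[OF fm lvf a p]) auto
      also have "2 powr p * a powr (p-2) * N^2 / (1 - 2 powr (p-2)) = K * N^2"
        unfolding K_def by simp
      finally show ?thesis .
    qed
    have Sm: "S \<in> sets R" unfolding S_def by measurable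
    define Jg where "Jg = (\<integral>\<^sup>+ x. ennreal (\<bar>g' x\<bar> powr p) \<partial>R)"
    have "Jg \<le> (\<integral>\<^sup>+x. ennreal (2 powr p) * (ennreal (f x powr p) * indicator S x)
               + ennreal (2 powr p) * ennreal (\<bar>g x\<bar> powr p) \<partial>R)"
      unfolding Jg_def by (rule nn_integral_mono) (use pw in auto)
    also have "\<dots> = ennreal (2 powr p) * (\<integral>\<^sup>+x. ennreal (f x powr p) * indicator S x \<partial>R)
               + ennreal (2 powr p) * (\<integral>\<^sup>+x. ennreal (\<bar>g x\<bar> powr p) \<partial>R)"
      using Sm by (simp add: nn_integral_add nn_integral_cmult)
    also have "\<dots> \<le> ennreal (2 powr p) * ennreal (K * N^2) + ennreal (2 powr p) * ennreal I"
      using tl IgR IgI by (intro add_mono mult_left_mono) auto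
    also have "\<dots> = ennreal (2 powr p * K * N^2 + 2 powr p * I)"
      using K I0 by (simp add: ennreal_mult[symmetric] mult.assoc)
    finally have Jb: "Jg \<le> ennreal (2 powr p * K * N^2 + 2 powr p * I)" .
    have JgU: "Jg = (\<integral>\<^sup>+ x\<in>U. ennreal (\<bar>g' x\<bar> powr p) \<partial>lebesgue)"
      unfolding Jg_def R_def using Ru by (simp add: nn_integral_restrict_space)
    have lg': "Lp p U g'" unfolding Lp_def using g'm Jb JgU unfolding R_def
      by (auto intro: le_less_trans)
    have "(Lp_norm p U g') powr p = enn2real Jg" using p JgU by (simp add: Lp_norm_powr)
    also have "\<dots> \<le> enn2real (ennreal (2 powr p * K * N^2 + 2 powr p * I))"
      using Jb by (intro enn2real_mono) auto
    also have "\<dots> = 2 powr p * K * N^2 + 2 powr p * I" using K I0 by (intro enn2real_ennreal) simp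
    finally have Jr: "(Lp_norm p U g') powr p \<le> 2 powr p * K * N^2 + 2 powr p * I" .
    have fin: "(weak_L2_norm U f')\<^sup>2 + (Lp_norm p U g') powr p
                  \<le> C * ((weak_L2_norm U f)\<^sup>2 + (Lp_norm p U g) powr p)"
    proof -
      have e: "C * (N^2 + I) = (Mc + (2 powr p * K * N^2 + 2 powr p * I))
           + ((2 powr p + 2 powr p * k powr (2-p)) * N^2 + (4 + 2 powr p * K) * I)"
        unfolding C_def Mc_def by (simp add: algebra_simps)
      have "0 \<le> (2 powr p + 2 powr p * k powr (2-p)) * N^2 + (4 + 2 powr p * K) * I"
        using K I0 by simp
      then show ?thesis using Wf' Jr e unfolding LpI N_def[symmetric] by linarith
    qed
    show "\<exists>f' g'. weak_L2 U f' \<and> Lp p U g'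
              \<and> (\<forall>x\<in>U. f x + g x = f' x + g' x)
              \<and> (\<forall>x\<in>U. g' x = 0 \<or> g' x > k)
              \<and> (\<forall>x\<in>U. f' x \<le> k)
              \<and> (weak_L2_norm U f')\<^sup>2 + (Lp_norm p U g') powr p
                  \<le> C * ((weak_L2_norm U f)\<^sup>2 + (Lp_norm p U g) powr p)"
      using wf' lg' fin k by (intro exI[of _ f'] exI[of _ g']) (auto simp: f'_def g'_def)
  qed
qed

end
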